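(* Let $f:\Omega_D\to\mathbb{O}$ be a slice function of class $C^1$, $\mathbb I=(I,J)\in\mathcal N$, and assume $D$ is bounded with boundary of class $C^1$. Define $Q_I,M_I:\mathbb{O}^3\to\mathbb{O}$ and $N_I:\mathbb{O}^2\to\mathbb{O}$ by $Q_I(x,\xi,a)=(|x|^2+|\xi|^2)^2a-2(|x|^2+|\xi|^2)\big(x(\xi_Ia)+\overline x(\overline{\xi_I}a)\big)+x^2(\xi_I^2a)+\overline x^2(\overline{\xi_I}^2a)+2|x|^2|\xi_I|^2a$, $M_I(x,\xi,a)=Q_I(x,\xi,\overline\xi a)-\overline x\,Q_I(x,\xi,a)$, $N_I(x,\xi)=|\Delta_{\xi_I}(x)|^2+2|\xi_I^\perp|^2\big(|x|^2-2\mathrm{Re}(x)\mathrm{Re}(\xi_I)+|\xi_I|^2\big)+|\xi_I^\perp|^4$. Then the zero set of $N_I$ equals $\Gamma_I$, and $S_{f,\mathbb I}(x,\xi)=\dfrac{M_I(x,\xi,\mathtt n_{\mathbb I}(\xi)f(\xi))}{2\pi^2N_I(x,\xi)^2}$ for all $(x,\xi)\in\partial^*\Omega_{\mathbb I}$, and $V_{f,\mathbb I}(x,\xi)=\dfrac{M_I(x,\xi,\overline{\mathcal D}_{\mathbb I}f(\xi))}{2\pi^2N_I(x,\xi)^2}$ for all $(x,\xi)\in\Omega^*_{\mathbb I}$.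
   Context: Octonions $\mathbb{O}=\mathbb{H}+\ell\mathbb{H}$ (product $(a+\ell b)(c+\ell d)=(ac-d\bar b)+\ell(\bar a d+cb)$, conjugation $\overline{a+\ell b}=\bar a-\ell b$), identified with $\mathbb{R}^8$; $\mathrm{Re},\mathrm{Im}$ real and imaginary parts; $\mathbb S=\{I:I^2=-1\}$; $\mathbb C_I=\mathrm{Span}(1,I)$; $\mathcal N=\{(I,J)\in\mathbb S^2:I\perp J\}$; $\mathbb H_{\mathbb I}=\mathrm{Span}(1,I,J,IJ)$. $D\subset\mathbb{R}^2$ non-empty open, invariant under $(\alpha,\beta)\mapsto(\alpha,-\beta)$, $\Omega_D=\{\alpha+\beta K:(\alpha,\beta)\in D,K\in\mathbb S\}$, assumed connected; $E=\{(x_0,\dots,x_3):(x_0,(x_1^2+x_2^2+x_3^2)^{1/2})\in D\}$. Slice functions: $f(\alpha+\beta K)=F_1(\alpha,\beta)+KF_2(\alpha,\beta)$ with stem $(F_1,F_2)$, $F_1$ even and $F_2$ odd in $\beta$ (also on other circular domains such as $\mathbb{O}\setminus\mathbb S_{I,\xi}$). Slice product: stems multiply by $(F_1,F_2)(G_1,G_2)=(F_1G_1-F_2G_2,F_1G_2+F_2G_1)$; $f^c$ induced by $(\overline{F_1},\overline{F_2})$; $N(f)=f\cdot f^c$ (its stem is real-valued... i.e. it is slice preserving, and $x\mapsto N(f)(x)^{-2}$ is again slice). $\Delta_\eta(x)=x^2-2x\mathrm{Re}\,\eta+|\eta|^2$, $\mathbb S_\eta=\{\mathrm{Re}\,\eta+K|\mathrm{Im}\,\eta|:K\in\mathbb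 S\}$. For $\xi\in\mathbb{O}$: $\xi_I$ orthogonal projection onto $\mathbb C_I$, $\xi_I^\perp=\xi-\xi_I$, $g_{I,\xi}(x)=|x|^2-x\overline{\xi_I}-\overline x\xi_I+|\xi|^2$ (slice function), $\mathbb S_{I,\xi}=\mathbb S_\xi$ if $\xi\in\mathbb C_I$ and $\emptyset$ otherwise; $N(g_{I,\xi})$ vanishes exactly on $\mathbb S_{I,\xi}$. $\Gamma_I=\{(x,\xi)\in\mathbb{O}^2:\xi\in\mathbb C_I,x\in\mathbb S_\xi\}$. $\Omega_{\mathbb I}=\Omega_D\cap\mathbb H_{\mathbb I}$ (bounded with $C^1$ boundary $\partial\Omega_{\mathbb I}$ in $\mathbb H_{\mathbb I}$), $\mathtt n_{\mathbb I}$ its outer unit normal in $\mathbb H_{\mathbb I}$. $\partial^*\Omega_{\mathbb I}=(\mathbb{O}^2\setminus\Gamma_I)\cap(\mathbb{O}\times\partial\Omega_{\mathbb I})$, $\Omega^*_{\mathbb I}=(\mathbb{O}^2\setminus\Gamma_I)\cap(\mathbb{O}\times\Omega_{\mathbb I})$. With $f_{\mathbb I}(v)=f(x_0+x_1I+x_2J+x_3IJ)$, $\overline{\mathcal D}_{\mathbb I}f(\xi)=\partial_0f_{\mathbb I}+I\partial_1f_{\mathbb I}+J\partial_2f_{\mathbb I}+(IJ)\partial_3f_{\mathbb I}$ evaluated at the coordinates of $\xi$. For fixed $\xi$ and a constant $a\in\mathbb{O}$ let $h_{\xi,a}$ be the slice function $x\mapsto(\overline\xi-\overline x)a$; then $S_{f,\mathbb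 I}(x,\xi)$ (for $\xi\in\partial\Omega_{\mathbb I}$, $x\notin\mathbb S_{I,\xi}$) is the value at $x$ of the slice function $\frac1{2\pi^2}N(g_{I,\xi})^{-2}\cdot\big((g^c_{I,\xi}\cdot g^c_{I,\xi})\cdot h_{\xi,a}\big)$ with $a=\mathtt n_{\mathbb I}(\xi)f(\xi)$, and $V_{f,\mathbb I}(x,\xi)$ (for $\xi\in\Omega_{\mathbb I}$) is the same with $a=\overline{\mathcal D}_{\mathbb I}f(\xi)$. *)

theory Defs
  imports "HOL-Analysis.Analysis"
begin

text \<open>A quaternion a + b i + c j + d k is the tuple (a,b,c,d) in R^4; an octonion a + l b
  (a, b quaternions) is the pair (a,b) in R^4 x R^4 = R^8.  The product-type norm and
  inner product are the Euclidean ones, so this is the identification of O with R^8.\<close>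

type_synonym quat = "real \<times> real \<times> real \<times> real"
type_synonym oct = "quat \<times> quat"

definition qmul :: "quat \<Rightarrow> quat \<Rightarrow> quat" where
  "qmul p q = (case p of (a1,b1,c1,d1) \<Rightarrow> case q of (a2,b2,c2,d2) \<Rightarrow>
     (a1*a2 - b1*b2 - c1*c2 - d1*d2,
      a1*b2 + b1*a2 + c1*d2 - d1*c2,
      a1*c2 - b1*d2 + c1*a2 + d1*b2,
      a1*d2 + b1*c2 - c1*b2 + d1*a2))"

definition qcnj :: "quat \<Rightarrow> quat" where
  "qcnj p = (case p of (a,b,c,d) \<Rightarrow> (a,-b,-c,-d))"

definition omul :: "oct \<Rightarrow> oct \<Rightarrow> oct" where
  "omul x y = (qmul (fst x) (fst y) - qmul (snd y) (qcnj (snd x)),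
               qmul (qcnj (fst x)) (snd y) + qmul (fst y) (snd x))"

definition ocnj :: "oct \<Rightarrow> oct" where
  "ocnj x = (qcnj (fst x), - snd x)"

definition oone :: oct where "oone = ((1,0,0,0),(0,0,0,0))"

definition orl :: "real \<Rightarrow> oct" where "orl r = r *\<^sub>R oone"

definition oRe :: "oct \<Rightarrow> real" where "oRe x = fst (fst x)"

definition oIm :: "oct \<Rightarrow> oct" where "oIm x = x - orl (oRe x)"

text \<open>inverse of an octonion: conj(x)/|x|^2 (and 0 for x = 0)\<close>
definition oinv :: "oct \<Rightarrow> oct" where
  "oinv x = (1 / (norm x)\<^sup>2) *\<^sub>R ocnj x"

definition sphS :: "oct set" where "sphS = {I. omul I I = - oone}"

definition CI :: "oct \<Rightarrow> oct set" where "CI I = span {oone, I}"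

definition NN :: "(oct \<times> oct) set" where
  "NN = {(I,J). I \<in> sphS \<and> J \<in> sphS \<and> inner I J = 0}"

definition HI :: "oct \<Rightarrow> oct \<Rightarrow> oct set" where
  "HI I J = span {oone, I, J, omul I J}"

definition OmegaD :: "(real \<times> real) set \<Rightarrow> oct set" where
  "OmegaD D = {orl \<alpha> + \<beta> *\<^sub>R K | \<alpha> \<beta> K. (\<alpha>,\<beta>) \<in> D \<and> K \<in> sphS}"

definition sph_of :: "oct \<Rightarrow> oct set" where
  "sph_of \<eta> = {orl (oRe \<eta>) + norm (oIm \<eta>) *\<^sub>R K | K. K \<in> sphS}"

definition Delta :: "oct \<Rightarrow> oct \<Rightarrow> oct" where
  "Delta \<eta> x = omul x x - (2 * oRe \<eta>) *\<^sub>R x + ((norm \<eta>)\<^sup>2) *\<^sub>R oone"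

text \<open>xi_I: orthogonal projection of xi onto C_I (metric projection onto a subspace);
  xi_I^perp = xi - xi_I\<close>
definition projI :: "oct \<Rightarrow> oct \<Rightarrow> oct" where
  "projI I \<xi> = closest_point (CI I) \<xi>"

definition perpI :: "oct \<Rightarrow> oct \<Rightarrow> oct" where
  "perpI I \<xi> = \<xi> - projI I \<xi>"

definition SIxi :: "oct \<Rightarrow> oct \<Rightarrow> oct set" where
  "SIxi I \<xi> = (if \<xi> \<in> CI I then sph_of \<xi> else {})"

definition GammaI :: "oct \<Rightarrow> (oct \<times> oct) set" where
  "GammaI I = {(x,\<xi>). \<xi> \<in> CI I \<and> x \<in> sph_of \<xi>}"

definition slice_fun :: "(real \<times> real) set \<Rightarrow> (oct \<Rightarrow> oct) \<Rightarrow> bool" where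
  "slice_fun D f \<longleftrightarrow> (\<exists>F1 F2 :: real \<Rightarrow> real \<Rightarrow> oct.
     (\<forall>\<alpha> \<beta>. (\<alpha>,\<beta>) \<in> D \<longrightarrow> F1 \<alpha> (-\<beta>) = F1 \<alpha> \<beta> \<and> F2 \<alpha> (-\<beta>) = - F2 \<alpha> \<beta>) \<and>
     (\<forall>\<alpha> \<beta> K. (\<alpha>,\<beta>) \<in> D \<longrightarrow> K \<in> sphS \<longrightarrow>
        f (orl \<alpha> + \<beta> *\<^sub>R K) = F1 \<alpha> \<beta> + omul K (F2 \<alpha> \<beta>)))"

text \<open>The stem of a slice function f, recovered from its values on one slice C_{K0},
  K0 = i: F1 = (f(a+bK0)+f(a-bK0))/2, F2 = -K0 (f(a+bK0)-f(a-bK0))/2.\<close>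
definition K0 :: oct where "K0 = ((0,1,0,0),(0,0,0,0))"

definition stem_of :: "(oct \<Rightarrow> oct) \<Rightarrow> real \<times> real \<Rightarrow> oct \<times> oct" where
  "stem_of f p = (case p of (\<alpha>,\<beta>) \<Rightarrow>
     ((1/2) *\<^sub>R (f (orl \<alpha> + \<beta> *\<^sub>R K0) + f (orl \<alpha> - \<beta> *\<^sub>R K0)),
      - (1/2) *\<^sub>R omul K0 (f (orl \<alpha> + \<beta> *\<^sub>R K0) - f (orl \<alpha> - \<beta> *\<^sub>R K0))))"

definition induced :: "(real \<times> real \<Rightarrow> oct \<times> oct) \<Rightarrow> oct \<Rightarrow> oct" where
  "induced F x = fst (F (oRe x, norm (oIm x)))
      + omul ((1 / norm (oIm x)) *\<^sub>R oIm x) (snd (F (oRe x, norm (oIm x))))"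

definition sprod :: "(oct \<Rightarrow> oct) \<Rightarrow> (oct \<Rightarrow> oct) \<Rightarrow> oct \<Rightarrow> oct" where
  "sprod f g = induced (\<lambda>p.
     (omul (fst (stem_of f p)) (fst (stem_of g p)) - omul (snd (stem_of f p)) (snd (stem_of g p)),
      omul (fst (stem_of f p)) (snd (stem_of g p)) + omul (snd (stem_of f p)) (fst (stem_of g p))))"

definition sconj :: "(oct \<Rightarrow> oct) \<Rightarrow> oct \<Rightarrow> oct" where
  "sconj f = induced (\<lambda>p. (ocnj (fst (stem_of f p)), ocnj (snd (stem_of f p))))"

definition snorm :: "(oct \<Rightarrow> oct) \<Rightarrow> oct \<Rightarrow> oct" where
  "snorm f = sprod f (sconj f)"

definition gI :: "oct \<Rightarrow> oct \<Rightarrow> oct \<Rightarrow> oct" where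
  "gI I \<xi> x = ((norm x)\<^sup>2) *\<^sub>R oone - omul x (ocnj (projI I \<xi>))
                - omul (ocnj x) (projI I \<xi>) + ((norm \<xi>)\<^sup>2) *\<^sub>R oone"

definition hfun :: "oct \<Rightarrow> oct \<Rightarrow> oct \<Rightarrow> oct" where
  "hfun \<xi> a x = omul (ocnj \<xi> - ocnj x) a"

text \<open>value at x of the slice function
  1/(2 pi^2) N(g)^{-2} . ((g^c . g^c) . h_{xi,a}); the slice function x -> N(g)(x)^{-2}
  is taken pointwise.\<close>
definition kernel :: "oct \<Rightarrow> oct \<Rightarrow> oct \<Rightarrow> oct \<Rightarrow> oct" where
  "kernel I \<xi> a x = (1 / (2 * pi\<^sup>2)) *\<^sub>R
     sprod (\<lambda>y. omul (oinv (snorm (gI I \<xi>) y)) (oinv (snorm (gI I \<xi>) y)))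
           (sprod (sprod (sconj (gI I \<xi>)) (sconj (gI I \<xi>))) (hfun \<xi> a)) x"

definition phiI :: "oct \<Rightarrow> oct \<Rightarrow> quat \<Rightarrow> oct" where
  "phiI I J v = (case v of (x0,x1,x2,x3) \<Rightarrow>
      orl x0 + x1 *\<^sub>R I + x2 *\<^sub>R J + x3 *\<^sub>R omul I J)"

definition coordsI :: "oct \<Rightarrow> oct \<Rightarrow> oct \<Rightarrow> quat" where
  "coordsI I J \<xi> = inv_into UNIV (phiI I J) \<xi>"

definition OmegaI :: "(real \<times> real) set \<Rightarrow> oct \<Rightarrow> oct \<Rightarrow> oct set" where
  "OmegaI D I J = OmegaD D \<inter> HI I J"

text \<open>boundary of Omega_I inside H_I (Omega_I is relatively open in the closed set H_I)\<close>
definition bdI :: "(real \<times> real) set \<Rightarrow> oct \<Rightarrow> oct \<Rightarrow> oct set" where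
  "bdI D I J = closure (OmegaI D I J) - OmegaI D I J"

definition C1_on :: "'a::real_normed_vector set \<Rightarrow> ('a \<Rightarrow> 'b::real_normed_vector) \<Rightarrow> bool" where
  "C1_on S f \<longleftrightarrow> (\<exists>f'. (\<forall>x\<in>S. (f has_derivative blinfun_apply (f' x)) (at x))
                       \<and> continuous_on S f')"

definition is_outer_normal :: "'a::euclidean_space set \<Rightarrow> 'a \<Rightarrow> 'a \<Rightarrow> bool" where
  "is_outer_normal U p \<nu> \<longleftrightarrow> (\<exists>r>0. \<exists>(\<rho>::'a \<Rightarrow> real) g.
      (\<forall>x\<in>ball p r. (\<rho> has_derivative (\<lambda>h. inner (g x) h)) (at x)) \<and>
      continuous_on (ball p r) g \<and> g p \<noteq> 0 \<and>
      (\<forall>x\<in>ball p r. x \<in> U \<longleftrightarrow> \<rho> x < 0) \<and>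
      \<nu> = (1 / norm (g p)) *\<^sub>R g p)"

definition C1_boundary :: "'a::euclidean_space set \<Rightarrow> bool" where
  "C1_boundary U \<longleftrightarrow> (\<forall>p\<in>frontier U. \<exists>\<nu>. is_outer_normal U p \<nu>)"

definition outer_normal :: "'a::euclidean_space set \<Rightarrow> 'a \<Rightarrow> 'a" where
  "outer_normal U p = (SOME \<nu>. is_outer_normal U p \<nu>)"

text \<open>n_I(xi): outer unit normal of Omega_I in H_I, transported from the coordinate
  domain phi_I^{-1}(Omega_I) in R^4 by the linear isometry phi_I\<close>
definition normalI :: "(real \<times> real) set \<Rightarrow> oct \<Rightarrow> oct \<Rightarrow> oct \<Rightarrow> oct" where
  "normalI D I J \<xi> = phiI I J (outer_normal (phiI I J -` OmegaI D I J) (coordsI I J \<xi>))"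

definition DbarI :: "oct \<Rightarrow> oct \<Rightarrow> (oct \<Rightarrow> oct) \<Rightarrow> oct \<Rightarrow> oct" where
  "DbarI I J f \<xi> =
     (let v = coordsI I J \<xi>; d = frechet_derivative (\<lambda>w. f (phiI I J w)) (at v) in
        d (1,0,0,0) + omul I (d (0,1,0,0)) + omul J (d (0,0,1,0)) + omul (omul I J) (d (0,0,0,1)))"

definition SfI :: "(real \<times> real) set \<Rightarrow> (oct \<Rightarrow> oct) \<Rightarrow> oct \<Rightarrow> oct \<Rightarrow> oct \<Rightarrow> oct \<Rightarrow> oct" where
  "SfI D f I J x \<xi> = kernel I \<xi> (omul (normalI D I J \<xi>) (f \<xi>)) x"

definition VfI :: "(oct \<Rightarrow> oct) \<Rightarrow> oct \<Rightarrow> oct \<Rightarrow> oct \<Rightarrow> oct \<Rightarrow> oct" where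
  "VfI f I J x \<xi> = kernel I \<xi> (DbarI I J f \<xi>) x"

definition QI :: "oct \<Rightarrow> oct \<Rightarrow> oct \<Rightarrow> oct \<Rightarrow> oct" where
  "QI I x \<xi> a =
     ((norm x)\<^sup>2 + (norm \<xi>)\<^sup>2)\<^sup>2 *\<^sub>R a
     - (2 * ((norm x)\<^sup>2 + (norm \<xi>)\<^sup>2)) *\<^sub>R
         (omul x (omul (projI I \<xi>) a) + omul (ocnj x) (omul (ocnj (projI I \<xi>)) a))
     + omul (omul x x) (omul (omul (projI I \<xi>) (projI I \<xi>)) a)
     + omul (omul (ocnj x) (ocnj x)) (omul (omul (ocnj (projI I \<xi>)) (ocnj (projI I \<xi>))) a)
     + (2 * (norm x)\<^sup>2 * (norm (projI I \<xi>))\<^sup>2) *\<^sub>R a"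

definition MI :: "oct \<Rightarrow> oct \<Rightarrow> oct \<Rightarrow> oct \<Rightarrow> oct" where
  "MI I x \<xi> a = QI I x \<xi> (omul (ocnj \<xi>) a) - omul (ocnj x) (QI I x \<xi> a)"

text \<open>N_I is real valued (a real octonion); we take it as a real number\<close>
definition NI :: "oct \<Rightarrow> oct \<Rightarrow> oct \<Rightarrow> real" where
  "NI I x \<xi> = (norm (Delta (projI I \<xi>) x))\<^sup>2
     + 2 * (norm (perpI I \<xi>))\<^sup>2 * ((norm x)\<^sup>2 - 2 * oRe x * oRe (projI I \<xi>) + (norm (projI I \<xi>))\<^sup>2)
     + (norm (perpI I \<xi>))^4"

end

theory Submission
  imports Defs
begin

lemmas oexp = omul_def qmul_def qcnj_def case_prod_unfold prod_eq_iff

lemma oct_cases: obtains a0 a1 a2 a3 a4 a5 a6 a7 where "x = ((a0,a1,a2,a3),(a4,a5,a6,a7))"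
  by (metis prod.exhaust)

lemma omul_add_left: "omul (x + y) z = omul x z + omul y z"
  by (simp add: oexp algebra_simps)
lemma omul_add_right: "omul z (x + y) = omul z x + omul z y"
  by (simp add: oexp algebra_simps)
lemma omul_diff_left: "omul (x - y) z = omul x z - omul y z"
  by (simp add: oexp algebra_simps)
lemma omul_diff_right: "omul z (x - y) = omul z x - omul z y"
  by (simp add: oexp algebra_simps)
lemma omul_minus_left: "omul (- x) z = - omul x z"
  by (simp add: oexp algebra_simps)
lemma omul_minus_right: "omul z (- x) = - omul z x"
  by (simp add: oexp algebra_simps)
lemma omul_zero_left: "omul 0 z = 0"
  by (simp add: oexp)
lemma omul_zero_right: "omul z 0 = 0"
  by (simp add: oexp)
lemma omul_scaleR_left: "omul (r *\<^sub>R x) z = r *\<^sub>R omul x z"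
  by (simp add: oexp algebra_simps)
lemma omul_scaleR_right: "omul z (r *\<^sub>R x) = r *\<^sub>R omul z x"
  by (simp add: oexp algebra_simps)
lemma omul_oone_left: "omul oone z = z"
  by (simp add: oexp oone_def)
lemma omul_oone_right: "omul z oone = z"
  by (simp add: oexp oone_def)

lemma oRe_add: "oRe (x + y) = oRe x + oRe y" by (simp add: oRe_def)
lemma oRe_diff: "oRe (x - y) = oRe x - oRe y" by (simp add: oRe_def)
lemma oRe_minus: "oRe (- x) = - oRe x" by (simp add: oRe_def)
lemma oRe_scaleR: "oRe (r *\<^sub>R x) = r * oRe x" by (simp add: oRe_def)
lemma oRe_oone: "oRe oone = 1" by (simp add: oRe_def oone_def)
lemma oRe_zero: "oRe 0 = 0" by (simp add: oRe_def)

lemma ocnj_add: "ocnj (x + y) = ocnj x + ocnj y" by (simp add: ocnj_def qcnj_def case_prod_unfold zero_prod_def)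
lemma ocnj_diff: "ocnj (x - y) = ocnj x - ocnj y" by (simp add: ocnj_def qcnj_def case_prod_unfold zero_prod_def)
lemma ocnj_minus: "ocnj (- x) = - ocnj x" by (simp add: ocnj_def qcnj_def case_prod_unfold zero_prod_def)
lemma ocnj_scaleR: "ocnj (r *\<^sub>R x) = r *\<^sub>R ocnj x" by (simp add: ocnj_def qcnj_def case_prod_unfold zero_prod_def)
lemma ocnj_oone: "ocnj oone = oone" by (simp add: ocnj_def qcnj_def oone_def)
lemma ocnj_zero: "ocnj 0 = 0" by (simp add: ocnj_def qcnj_def case_prod_unfold zero_prod_def)
lemma ocnj_im: "oRe U = 0 \<Longrightarrow> ocnj U = - U"
  by (cases U rule: oct_cases) (simp add: ocnj_def qcnj_def oRe_def)

lemmas olin = omul_add_left omul_add_right omul_diff_left omul_diff_right omul_minus_left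
  omul_minus_right omul_zero_left omul_zero_right omul_scaleR_left omul_scaleR_right
  omul_oone_left omul_oone_right oRe_add oRe_diff oRe_minus oRe_scaleR oRe_oone oRe_zero
  ocnj_add ocnj_diff ocnj_minus ocnj_scaleR ocnj_oone ocnj_zero

lemma inner_oone: "inner oone x = oRe x"
proof -
  obtain a0 a1 a2 a3 a4 a5 a6 a7 where U: "x = ((a0,a1,a2,a3),(a4,a5,a6,a7))" by (rule oct_cases)
  show ?thesis unfolding U by (simp add: oone_def oRe_def)
qed

lemma norm_oone: "norm oone = 1"
  by (simp add: oone_def norm_Pair)

lemma omul_im: assumes "oRe U = 0" shows "omul U (omul U y) = - (inner U U) *\<^sub>R y"
proof -
  obtain a0 a1 a2 a3 a4 a5 a6 a7 where U: "U = ((a0,a1,a2,a3),(a4,a5,a6,a7))" by (rule oct_cases)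
  obtain b0 b1 b2 b3 b4 b5 b6 b7 where y: "y = ((b0,b1,b2,b3),(b4,b5,b6,b7))" by (rule oct_cases)
  show ?thesis using assms unfolding U y by (simp add: oexp oRe_def algebra_simps power2_eq_square)
qed

lemma omul_im_sq: "oRe U = 0 \<Longrightarrow> omul U U = - (inner U U) *\<^sub>R oone"
  using omul_im[of U oone] by (simp add: omul_oone_right)

lemma oIm_re: "oRe (oIm x) = 0"
  by (simp add: oIm_def orl_def oRe_diff oRe_scaleR oRe_oone)

lemma oct_decomp: "x = oRe x *\<^sub>R oone + oIm x"
  by (simp add: oIm_def orl_def)

lemma ocnj_decomp: "ocnj x = oRe x *\<^sub>R oone - oIm x"
  by (subst (1) oct_decomp) (simp add: olin ocnj_im[OF oIm_re])

lemma norm_sq_decomp: assumes "oRe U = 0"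
  shows "(norm (p *\<^sub>R oone + U))\<^sup>2 = p\<^sup>2 + (norm U)\<^sup>2"
  unfolding power2_norm_eq_inner using assms
  by (simp add: inner_add_left inner_add_right inner_oone oRe_oone
     inner_commute[of U oone] power2_eq_square)

lemma norm_sq_oK: assumes "oRe K = 0" "norm K = 1"
  shows "(norm (p *\<^sub>R oone + q *\<^sub>R K))\<^sup>2 = p\<^sup>2 + q\<^sup>2"
  using norm_sq_decomp[of "q *\<^sub>R K" p] assms by (simp add: oRe_scaleR power_mult_distrib)

definition unitim :: "oct \<Rightarrow> bool" where "unitim K \<longleftrightarrow> oRe K = 0 \<and> norm K = 1"

lemma unitim_KK: "unitim K \<Longrightarrow> omul K (omul K y) = - y"
  using omul_im[of K y] by (simp add: unitim_def flip: power2_norm_eq_inner)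

lemma unitim_KK1: "unitim K \<Longrightarrow> omul K K = - oone"
  using unitim_KK[of K oone] by (simp add: omul_oone_right)

lemma unitim_K0: "unitim K0"
  by (simp add: unitim_def K0_def oRe_def norm_Pair)

lemma unitim_minus: "unitim K \<Longrightarrow> unitim (- K)"
  by (simp add: unitim_def oRe_minus)

lemma oRe_orlK: "unitim K \<Longrightarrow> oRe (orl \<alpha> + \<beta> *\<^sub>R K) = \<alpha>"
  by (simp add: unitim_def orl_def olin)

lemma oIm_orlK: "unitim K \<Longrightarrow> oIm (orl \<alpha> + \<beta> *\<^sub>R K) = \<beta> *\<^sub>R K"
  by (simp add: oIm_def oRe_orlK)

lemma decomp_unit: "\<exists>K. unitim K \<and> x = orl (oRe x) + norm (oIm x) *\<^sub>R K"
proof (cases "oIm x = 0")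
  case True
  then show ?thesis using unitim_K0 oct_decomp[of x] by (intro exI[of _ K0]) (simp add: orl_def)
next
  case False
  define K where "K = (1 / norm (oIm x)) *\<^sub>R oIm x"
  have "unitim K" using False by (simp add: K_def unitim_def oRe_scaleR oIm_re)
  moreover have "x = orl (oRe x) + norm (oIm x) *\<^sub>R K"
    using False oct_decomp[of x] by (simp add: K_def orl_def)
  ultimately show ?thesis by blast
qed

definition has_stem :: "(oct \<Rightarrow> oct) \<Rightarrow> (real \<Rightarrow> real \<Rightarrow> oct) \<Rightarrow> (real \<Rightarrow> real \<Rightarrow> oct) \<Rightarrow> bool" where
  "has_stem f A B \<longleftrightarrow> (\<forall>\<alpha>. B \<alpha> 0 = 0) \<and>
     (\<forall>\<alpha> \<beta> K. 0 \<le> \<beta> \<longrightarrow> unitim K \<longrightarrow> f (orl \<alpha> + \<beta> *\<^sub>R K) = A \<alpha> \<beta> + omul K (B \<alpha> \<beta>))"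

lemma has_stemD: "has_stem f A B \<Longrightarrow> 0 \<le> \<beta> \<Longrightarrow> unitim K \<Longrightarrow> f (orl \<alpha> + \<beta> *\<^sub>R K) = A \<alpha> \<beta> + omul K (B \<alpha> \<beta>)"
  unfolding has_stem_def by blast

lemma oRe_orl: "oRe (orl \<alpha>) = \<alpha>" by (simp add: orl_def oRe_scaleR oRe_oone)
lemma oIm_orl: "oIm (orl \<alpha>) = 0" by (simp add: oIm_def oRe_orl)

lemma has_stem0: "has_stem f A B \<Longrightarrow> B \<alpha> 0 = 0"
  by (simp add: has_stem_def)

lemma has_stem_cong: assumes "has_stem f A B"
  and "\<And>\<alpha> \<beta>. 0 \<le> \<beta> \<Longrightarrow> A \<alpha> \<beta> = A' \<alpha> \<beta>" "\<And>\<alpha> \<beta>. 0 \<le> \<beta> \<Longrightarrow> B \<alpha> \<beta> = B' \<alpha> \<beta>"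
  shows "has_stem f A' B'"
  using assms unfolding has_stem_def by (metis order_refl)

lemma induced_stem:
  assumes P: "\<And>\<alpha> \<beta>. 0 \<le> \<beta> \<Longrightarrow> P (\<alpha>, \<beta>) = (A \<alpha> \<beta>, B \<alpha> \<beta>)" and B0: "\<And>\<alpha>. B \<alpha> 0 = 0"
  shows "has_stem (induced P) A B"
  unfolding has_stem_def
proof (intro conjI allI impI)
  fix \<alpha> show "B \<alpha> 0 = 0" by (rule B0)
next
  fix \<alpha> \<beta> :: real and K assume b: "0 \<le> \<beta>" and K: "unitim K"
  have nK: "norm K = 1" using K by (simp add: unitim_def)
  have n: "norm (oIm (orl \<alpha> + \<beta> *\<^sub>R K)) = \<beta>" using b nK by (simp add: oIm_orlK[OF K])
  show "induced P (orl \<alpha> + \<beta> *\<^sub>R K) = A \<alpha> \<beta> + omul K (B \<alpha> \<beta>)"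
  proof (cases "\<beta> = 0")
    case True
    then show ?thesis using P[of 0 \<alpha>] B0[of \<alpha>]
      by (simp add: induced_def oRe_orl oIm_orl omul_zero_left omul_zero_right)
  next
    case False
    then show ?thesis using P[OF b, of \<alpha>] b
      by (simp add: induced_def oRe_orlK[OF K] oIm_orlK[OF K] n nK)
  qed
qed

lemma stem_of_stem: assumes f: "has_stem f A B" and b: "0 \<le> \<beta>"
  shows "stem_of f (\<alpha>, \<beta>) = (A \<alpha> \<beta>, B \<alpha> \<beta>)"
proof -
  have e1: "f (orl \<alpha> + \<beta> *\<^sub>R K0) = A \<alpha> \<beta> + omul K0 (B \<alpha> \<beta>)"
    by (rule has_stemD[OF f b unitim_K0])
  have "f (orl \<alpha> + \<beta> *\<^sub>R (- K0)) = A \<alpha> \<beta> + omul (- K0) (B \<alpha> \<beta>)"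
    by (rule has_stemD[OF f b unitim_minus[OF unitim_K0]])
  then have e2: "f (orl \<alpha> - \<beta> *\<^sub>R K0) = A \<alpha> \<beta> - omul K0 (B \<alpha> \<beta>)"
    by (simp add: omul_minus_left)
  have s: "f (orl \<alpha> + \<beta> *\<^sub>R K0) + f (orl \<alpha> - \<beta> *\<^sub>R K0) = 2 *\<^sub>R A \<alpha> \<beta>"
    using e1 e2 by (simp add: scaleR_2)
  have d: "f (orl \<alpha> + \<beta> *\<^sub>R K0) - f (orl \<alpha> - \<beta> *\<^sub>R K0) = 2 *\<^sub>R omul K0 (B \<alpha> \<beta>)"
    using e1 e2 by (simp add: scaleR_2)
  show ?thesis unfolding stem_of_def using s d
    by (simp add: omul_scaleR_right unitim_KK[OF unitim_K0])
qed

lemma sprod_stem: assumes f: "has_stem f A B" and g: "has_stem g C E"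
  shows "has_stem (sprod f g) (\<lambda>\<alpha> \<beta>. omul (A \<alpha> \<beta>) (C \<alpha> \<beta>) - omul (B \<alpha> \<beta>) (E \<alpha> \<beta>))
                              (\<lambda>\<alpha> \<beta>. omul (A \<alpha> \<beta>) (E \<alpha> \<beta>) + omul (B \<alpha> \<beta>) (C \<alpha> \<beta>))"
  unfolding sprod_def
  by (rule induced_stem) (simp_all add: stem_of_stem[OF f] stem_of_stem[OF g]
        has_stem0[OF f] has_stem0[OF g] omul_zero_left omul_zero_right)

lemma sconj_stem: assumes f: "has_stem f A B"
  shows "has_stem (sconj f) (\<lambda>\<alpha> \<beta>. ocnj (A \<alpha> \<beta>)) (\<lambda>\<alpha> \<beta>. ocnj (B \<alpha> \<beta>))"
  unfolding sconj_def
  by (rule induced_stem) (simp_all add: stem_of_stem[OF f] has_stem0[OF f] ocnj_zero)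

lemma norm_orlK: "unitim K \<Longrightarrow> (norm (orl \<alpha> + \<beta> *\<^sub>R K))\<^sup>2 = \<alpha>\<^sup>2 + \<beta>\<^sup>2"
  unfolding orl_def by (rule norm_sq_oK) (auto simp: unitim_def)

lemma ocnj_orlK: "unitim K \<Longrightarrow> ocnj (orl \<alpha> + \<beta> *\<^sub>R K) = \<alpha> *\<^sub>R oone - \<beta> *\<^sub>R K"
  by (simp add: orl_def olin ocnj_im unitim_def)

lemma gI_stem: "has_stem (gI I \<xi>) (\<lambda>\<alpha> \<beta>. (\<alpha>\<^sup>2 + \<beta>\<^sup>2 - 2 * \<alpha> * oRe (projI I \<xi>) + (norm \<xi>)\<^sup>2) *\<^sub>R oone)
   (\<lambda>\<alpha> \<beta>. (2 * \<beta>) *\<^sub>R oIm (projI I \<xi>))"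
  unfolding has_stem_def
proof (intro conjI allI impI)
  fix \<alpha> \<beta> :: real and K assume b: "0 \<le> \<beta>" and K: "unitim K"
  define c where "c = projI I \<xi>"
  have c: "c = oRe c *\<^sub>R oone + oIm c" by (rule oct_decomp)
  have cc: "ocnj c = oRe c *\<^sub>R oone - oIm c" by (rule ocnj_decomp)
  show "gI I \<xi> (orl \<alpha> + \<beta> *\<^sub>R K) = (\<alpha>\<^sup>2 + \<beta>\<^sup>2 - 2 * \<alpha> * oRe (projI I \<xi>) + (norm \<xi>)\<^sup>2) *\<^sub>R oone +
         omul K ((2 * \<beta>) *\<^sub>R oIm (projI I \<xi>))"
    unfolding gI_def c_def[symmetric] norm_orlK[OF K] ocnj_orlK[OF K]
    apply (subst (1 2) c)
    apply (simp add: cc orl_def olin ocnj_im[OF oIm_re] algebra_simps)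
    apply (simp add: prod_eq_iff algebra_simps)
    done
qed simp

lemma hfun_stem: "has_stem (hfun \<xi> a) (\<lambda>\<alpha> \<beta>. omul (ocnj \<xi> - \<alpha> *\<^sub>R oone) a) (\<lambda>\<alpha> \<beta>. \<beta> *\<^sub>R a)"
  unfolding has_stem_def
proof (intro conjI allI impI)
  fix \<alpha> \<beta> :: real and K assume b: "0 \<le> \<beta>" and K: "unitim K"
  show "hfun \<xi> a (orl \<alpha> + \<beta> *\<^sub>R K) = omul (ocnj \<xi> - \<alpha> *\<^sub>R oone) a + omul K (\<beta> *\<^sub>R a)"
    unfolding hfun_def ocnj_orlK[OF K] by (simp add: olin algebra_simps)
qed simp

lemma oinv_real: "oinv (r *\<^sub>R oone) = (1 / r) *\<^sub>R oone"
proof -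
  have "oinv (r *\<^sub>R oone) = (r / r\<^sup>2) *\<^sub>R oone"
    by (simp add: oinv_def ocnj_scaleR ocnj_oone norm_oone)
  also have "r / r\<^sup>2 = 1 / r" by (cases "r = 0") (simp_all add: power2_eq_square)
  finally show ?thesis .
qed

lemma pyth_proj: "(norm \<xi>)\<^sup>2 = (norm (projI I \<xi>))\<^sup>2 + (norm (\<xi> - projI I \<xi>))\<^sup>2"
proof -
  define c where "c = projI I \<xi>"
  have cv: "convex (CI I)" unfolding CI_def by (simp add: subspace_imp_convex subspace_span)
  have cl: "closed (CI I)" unfolding CI_def by simp
  have ne: "CI I \<noteq> {}" unfolding CI_def using span_zero by blast
  have cin: "c \<in> CI I" unfolding c_def projI_def by (rule closest_point_in_set[OF cl ne])
  have z: "0 \<in> CI I" unfolding CI_def by (rule span_zero)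
  have t: "2 *\<^sub>R c \<in> CI I" using cin unfolding CI_def by (rule span_mul)
  have d1: "inner (\<xi> - c) (0 - c) \<le> 0"
    unfolding c_def projI_def by (rule closest_point_dot[OF cv cl z])
  have d2: "inner (\<xi> - c) (2 *\<^sub>R c - c) \<le> 0"
    unfolding c_def projI_def by (rule closest_point_dot[OF cv cl t[unfolded c_def projI_def]])
  have o: "inner (\<xi> - c) c = 0" using d1 d2 by (simp add: inner_diff_right inner_minus_right scaleR_2 inner_add_right)
  have "\<xi> = c + (\<xi> - c)" by simp
  then have "(norm \<xi>)\<^sup>2 = inner (c + (\<xi> - c)) (c + (\<xi> - c))" by (simp add: power2_norm_eq_inner)
  also have "\<dots> = (norm c)\<^sup>2 + (norm (\<xi> - c))\<^sup>2"
    using o by (simp only: inner_add_left inner_add_right power2_norm_eq_inner inner_commute[of c "\<xi> - c"])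
  finally show ?thesis unfolding c_def .
qed

lemma kernel_val:
  assumes K: "unitim K" and b: "0 \<le> \<beta>"
  shows "kernel I \<xi> a (orl \<alpha> + \<beta> *\<^sub>R K) =
     (1 / (2 * pi\<^sup>2 * (NI I (orl \<alpha> + \<beta> *\<^sub>R K) \<xi>)\<^sup>2)) *\<^sub>R MI I (orl \<alpha> + \<beta> *\<^sub>R K) \<xi> a"
proof -
  define c where "c = projI I \<xi>"
  define a0 where "a0 = oRe c"
  define d where "d = oIm c"
  have c_eq: "c = a0 *\<^sub>R oone + d" unfolding a0_def d_def by (rule oct_decomp)
  have d0: "oRe d = 0" unfolding d_def by (rule oIm_re)
  have dd: "\<And>y. omul d (omul d y) = - ((norm d)\<^sup>2) *\<^sub>R y"
    using omul_im[OF d0] by (simp add: power2_norm_eq_inner)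
  have dd1: "omul d d = - ((norm d)\<^sup>2) *\<^sub>R oone"
    using dd[of oone] by (simp add: omul_oone_right)
  have cd: "ocnj d = - d" by (rule ocnj_im[OF d0])
  define F1 where "F1 = (\<lambda>\<alpha> \<beta>::real. \<alpha>\<^sup>2 + \<beta>\<^sup>2 - 2 * \<alpha> * a0 + (norm \<xi>)\<^sup>2)"
  define Nf where "Nf = (\<lambda>\<alpha> \<beta>::real. (F1 \<alpha> \<beta>)\<^sup>2 - 4 * \<beta>\<^sup>2 * (norm d)\<^sup>2)"
  have gs: "has_stem (gI I \<xi>) (\<lambda>\<alpha> \<beta>. F1 \<alpha> \<beta> *\<^sub>R oone) (\<lambda>\<alpha> \<beta>. (2 * \<beta>) *\<^sub>R d)"
    using gI_stem[of I \<xi>] unfolding F1_def a0_def d_def c_def .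
  have ns: "has_stem (snorm (gI I \<xi>)) (\<lambda>\<alpha> \<beta>. Nf \<alpha> \<beta> *\<^sub>R oone) (\<lambda>\<alpha> \<beta>. 0)"
    unfolding snorm_def
    apply (rule has_stem_cong[OF sprod_stem[OF gs sconj_stem[OF gs]]])
    apply (simp_all add: olin cd dd1 Nf_def power2_eq_square algebra_simps)
    done
  have Ps: "has_stem (\<lambda>y. omul (oinv (snorm (gI I \<xi>) y)) (oinv (snorm (gI I \<xi>) y)))
      (\<lambda>\<alpha> \<beta>. (1 / (Nf \<alpha> \<beta>)\<^sup>2) *\<^sub>R oone) (\<lambda>\<alpha> \<beta>. 0)"
    unfolding has_stem_def
  proof (intro conjI allI impI)
    fix \<alpha>' \<beta>' :: real and K' assume "0 \<le> \<beta>'" "unitim K'"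
    then have "snorm (gI I \<xi>) (orl \<alpha>' + \<beta>' *\<^sub>R K') = Nf \<alpha>' \<beta>' *\<^sub>R oone"
      using has_stemD[OF ns] by (simp add: omul_zero_right)
    then show "omul (oinv (snorm (gI I \<xi>) (orl \<alpha>' + \<beta>' *\<^sub>R K'))) (oinv (snorm (gI I \<xi>) (orl \<alpha>' + \<beta>' *\<^sub>R K'))) =
       (1 / (Nf \<alpha>' \<beta>')\<^sup>2) *\<^sub>R oone + omul K' 0"
      by (simp add: oinv_real olin power2_eq_square)
  qed simp
  note T = sprod_stem[OF Ps sprod_stem[OF sprod_stem[OF sconj_stem[OF gs] sconj_stem[OF gs]] hfun_stem[of \<xi> a]]]
  note kv = has_stemD[OF T b K, of \<alpha>]
  have KK: "\<And>y. omul K (omul K y) = - y" by (rule unitim_KK[OF K])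
  have KK1: "omul K K = - oone" by (rule unitim_KK1[OF K])
  have nc: "(norm c)\<^sup>2 = a0\<^sup>2 + (norm d)\<^sup>2" unfolding c_eq by (rule norm_sq_decomp[OF d0])
  define gA where "gA = F1 \<alpha> \<beta> *\<^sub>R oone"
  define gB where "gB = (2 * \<beta>) *\<^sub>R d"
  define G1 where "G1 = omul (ocnj gA) (ocnj gA) - omul (ocnj gB) (ocnj gB)"
  define G2 where "G2 = omul (ocnj gA) (ocnj gB) + omul (ocnj gB) (ocnj gA)"
  define H1 where "H1 = omul (ocnj \<xi> - \<alpha> *\<^sub>R oone) a"
  define H2 where "H2 = \<beta> *\<^sub>R a"
  define R1 where "R1 = omul G1 H1 - omul G2 H2"
  define R2 where "R2 = omul G1 H2 + omul G2 H1"
  have kv': "kernel I \<xi> a (orl \<alpha> + \<beta> *\<^sub>R K) = (1 / (2 * pi\<^sup>2)) *\<^sub>R ((1 / (Nf \<alpha> \<beta>)\<^sup>2) *\<^sub>R (R1 + omul K R2))"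
    unfolding kernel_def kv
    by (simp only: omul_scaleR_left omul_oone_left omul_zero_left diff_zero add_0_right
          omul_scaleR_right scaleR_add_right flip: R1_def R2_def G1_def G2_def H1_def H2_def gA_def gB_def)
  have big: "R1 + omul K R2 = MI I (orl \<alpha> + \<beta> *\<^sub>R K) \<xi> a"
    unfolding R1_def R2_def G1_def G2_def H1_def H2_def gA_def gB_def MI_def QI_def c_def[symmetric]
      nc norm_orlK[OF K] ocnj_orlK[OF K] F1_def
    apply (simp add: c_eq orl_def olin KK KK1 dd dd1 cd algebra_simps)
    apply (simp only: prod_eq_iff fst_add snd_add fst_diff snd_diff fst_scaleR snd_scaleR fst_uminus snd_uminus fst_zero snd_zero real_scaleR_def)
    apply (intro conjI; algebra)
    done
  have pyth: "(norm \<xi>)\<^sup>2 = (norm c)\<^sup>2 + (norm (\<xi> - c))\<^sup>2"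
    unfolding c_def by (rule pyth_proj)
  have Dl: "Delta c (orl \<alpha> + \<beta> *\<^sub>R K) = (\<alpha>\<^sup>2 - \<beta>\<^sup>2 - 2 * a0 * \<alpha> + (norm c)\<^sup>2) *\<^sub>R oone
      + (2 * \<alpha> * \<beta> - 2 * a0 * \<beta>) *\<^sub>R K"
    unfolding Delta_def a0_def[symmetric]
    apply (simp add: orl_def olin KK1 algebra_simps)
    apply (simp add: prod_eq_iff algebra_simps power2_eq_square)
    done
  have NIv: "NI I (orl \<alpha> + \<beta> *\<^sub>R K) \<xi> = Nf \<alpha> \<beta>"
  proof -
    have e4: "(norm (\<xi> - c))^4 = ((norm (\<xi> - c))\<^sup>2)\<^sup>2" by simp
    have nK: "oRe K = 0" "norm K = 1" using K by (auto simp: unitim_def)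
    show ?thesis
      unfolding NI_def c_def[symmetric] perpI_def Dl norm_sq_oK[OF nK] norm_orlK[OF K] oRe_orlK[OF K]
        a0_def[symmetric] e4 Nf_def F1_def pyth nc
      by (simp add: power2_eq_square algebra_simps)
  qed
  show ?thesis unfolding kv' big NIv
    by (simp add: scaleR_add_right[symmetric] big)
qed

lemma NI_formula:
  assumes K: "unitim K"
  shows "NI I (orl \<alpha> + \<beta> *\<^sub>R K) \<xi> =
    ((\<alpha> - oRe (projI I \<xi>))\<^sup>2 - \<beta>\<^sup>2 + (norm (oIm (projI I \<xi>)))\<^sup>2)\<^sup>2 + (2 * \<beta> * (\<alpha> - oRe (projI I \<xi>)))\<^sup>2
    + 2 * (norm (\<xi> - projI I \<xi>))\<^sup>2 * ((\<alpha> - oRe (projI I \<xi>))\<^sup>2 + \<beta>\<^sup>2 + (norm (oIm (projI I \<xi>)))\<^sup>2)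
    + ((norm (\<xi> - projI I \<xi>))\<^sup>2)\<^sup>2"
proof -
  define c where "c = projI I \<xi>"
  define a0 where "a0 = oRe c"
  define d where "d = oIm c"
  have c_eq: "c = a0 *\<^sub>R oone + d" unfolding a0_def d_def by (rule oct_decomp)
  have d0: "oRe d = 0" unfolding d_def by (rule oIm_re)
  have KK1: "omul K K = - oone" by (rule unitim_KK1[OF K])
  have nc: "(norm c)\<^sup>2 = a0\<^sup>2 + (norm d)\<^sup>2" unfolding c_eq by (rule norm_sq_decomp[OF d0])
  have Dl: "Delta c (orl \<alpha> + \<beta> *\<^sub>R K) = (\<alpha>\<^sup>2 - \<beta>\<^sup>2 - 2 * a0 * \<alpha> + (norm c)\<^sup>2) *\<^sub>R oone
      + (2 * \<alpha> * \<beta> - 2 * a0 * \<beta>) *\<^sub>R K"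
    unfolding Delta_def a0_def[symmetric]
    apply (simp add: orl_def olin KK1 algebra_simps)
    apply (simp add: prod_eq_iff algebra_simps power2_eq_square)
    done
  have e4: "(norm (\<xi> - c))^4 = ((norm (\<xi> - c))\<^sup>2)\<^sup>2" by simp
  have nK: "oRe K = 0" "norm K = 1" using K by (auto simp: unitim_def)
  show ?thesis
    unfolding NI_def c_def[symmetric] perpI_def Dl norm_sq_oK[OF nK] norm_orlK[OF K] oRe_orlK[OF K]
      a0_def[symmetric] d_def[symmetric] e4 nc
    by (simp add: power2_eq_square algebra_simps)
qed

lemma kernel_all: "kernel I \<xi> a x = (1 / (2 * pi\<^sup>2 * (NI I x \<xi>)\<^sup>2)) *\<^sub>R MI I x \<xi> a"
proof -
  obtain K where K: "unitim K" and x: "x = orl (oRe x) + norm (oIm x) *\<^sub>R K"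
    using decomp_unit by blast
  show ?thesis by (subst (1 2 3) x) (rule kernel_val[OF K norm_ge_zero])
qed

lemma sphS_iff: "K \<in> sphS \<longleftrightarrow> unitim K"
proof
  assume "unitim K" then show "K \<in> sphS" by (simp add: sphS_def unitim_KK1)
next
  assume "K \<in> sphS"
  then have KK: "omul K K = - oone" by (simp add: sphS_def)
  define r where "r = oRe K"
  define U where "U = oIm K"
  have U0: "oRe U = 0" unfolding U_def by (rule oIm_re)
  have Keq: "K = r *\<^sub>R oone + U" unfolding r_def U_def by (rule oct_decomp)
  have "omul K K = (r\<^sup>2 - inner U U) *\<^sub>R oone + (2 * r) *\<^sub>R U"
    unfolding Keq
    apply (simp add: olin omul_im_sq[OF U0] algebra_simps power2_eq_square)
    apply (simp add: prod_eq_iff algebra_simps)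
    done
  with KK have e: "(r\<^sup>2 - inner U U) *\<^sub>R oone + (2 * r) *\<^sub>R U = - oone" by simp
  have "oRe ((r\<^sup>2 - inner U U) *\<^sub>R oone + (2 * r) *\<^sub>R U) = oRe (- oone)" using e by simp
  then have e1: "r\<^sup>2 - inner U U = -1"
    by (simp only: olin U0) simp
  with e have "(2 * r) *\<^sub>R U = 0" by simp
  then have "r = 0 \<or> U = 0" by simp
  moreover have "U \<noteq> 0" proof
    assume "U = 0" with e1 have "r\<^sup>2 = -1" by simp
    moreover have "r\<^sup>2 \<ge> 0" by simp
    ultimately show False by linarith
  qed
  ultimately have r0: "r = 0" by blast
  with e1 have "inner U U = 1" by simp
  then have "norm U = 1" by (simp add: norm_eq_sqrt_inner)
  then show "unitim K" using r0 Keq U0 by (simp add: unitim_def)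
qed

lemma sph_of_iff: "x \<in> sph_of \<eta> \<longleftrightarrow> oRe x = oRe \<eta> \<and> norm (oIm x) = norm (oIm \<eta>)"
proof
  assume "x \<in> sph_of \<eta>"
  then obtain K where K: "unitim K" and x: "x = orl (oRe \<eta>) + norm (oIm \<eta>) *\<^sub>R K"
    by (auto simp: sph_of_def sphS_iff)
  have nK: "norm K = 1" using K by (simp add: unitim_def)
  show "oRe x = oRe \<eta> \<and> norm (oIm x) = norm (oIm \<eta>)"
    unfolding x oRe_orlK[OF K] oIm_orlK[OF K] using nK by simp
next
  assume h: "oRe x = oRe \<eta> \<and> norm (oIm x) = norm (oIm \<eta>)"
  obtain K where K: "unitim K" and x: "x = orl (oRe x) + norm (oIm x) *\<^sub>R K"
    using decomp_unit by blast
  have x2: "x = orl (oRe \<eta>) + norm (oIm \<eta>) *\<^sub>R K" using x h by metis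
  have "K \<in> sphS" using K sphS_iff by blast
  then show "x \<in> sph_of \<eta>" unfolding sph_of_def mem_Collect_eq using x2 by blast
qed

lemma real_zero_lemma:
  fixes \<alpha> \<beta> a0 n P :: real
  assumes b: "0 \<le> \<beta>" and n: "0 \<le> n" and P: "0 \<le> P"
  shows "((\<alpha> - a0)\<^sup>2 - \<beta>\<^sup>2 + n\<^sup>2)\<^sup>2 + (2 * \<beta> * (\<alpha> - a0))\<^sup>2
    + 2 * P * ((\<alpha> - a0)\<^sup>2 + \<beta>\<^sup>2 + n\<^sup>2) + P\<^sup>2 = 0 \<longleftrightarrow> P = 0 \<and> \<alpha> = a0 \<and> \<beta> = n"
proof
  assume h: "((\<alpha> - a0)\<^sup>2 - \<beta>\<^sup>2 + n\<^sup>2)\<^sup>2 + (2 * \<beta> * (\<alpha> - a0))\<^sup>2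
    + 2 * P * ((\<alpha> - a0)\<^sup>2 + \<beta>\<^sup>2 + n\<^sup>2) + P\<^sup>2 = 0"
  have t1: "0 \<le> ((\<alpha> - a0)\<^sup>2 - \<beta>\<^sup>2 + n\<^sup>2)\<^sup>2" by simp
  have t2: "0 \<le> (2 * \<beta> * (\<alpha> - a0))\<^sup>2" by simp
  have t3: "0 \<le> 2 * P * ((\<alpha> - a0)\<^sup>2 + \<beta>\<^sup>2 + n\<^sup>2)" using P by simp
  have t4: "0 \<le> P\<^sup>2" by simp
  have z1: "((\<alpha> - a0)\<^sup>2 - \<beta>\<^sup>2 + n\<^sup>2)\<^sup>2 = 0" and z2: "(2 * \<beta> * (\<alpha> - a0))\<^sup>2 = 0" and z4: "P\<^sup>2 = 0"
    using h t1 t2 t3 t4 by linarith+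
  have P0: "P = 0" using z4 by simp
  have A: "(\<alpha> - a0)\<^sup>2 - \<beta>\<^sup>2 + n\<^sup>2 = 0" using z1 by simp
  have B: "\<beta> = 0 \<or> \<alpha> = a0" using z2 by simp
  show "P = 0 \<and> \<alpha> = a0 \<and> \<beta> = n"
  proof (cases "\<beta> = 0")
    case True
    with A have "(\<alpha> - a0)\<^sup>2 + n\<^sup>2 = 0" by simp
    moreover have "0 \<le> (\<alpha> - a0)\<^sup>2" "0 \<le> n\<^sup>2" by simp_all
    ultimately have "(\<alpha> - a0)\<^sup>2 = 0" "n\<^sup>2 = 0" by linarith+
    then show ?thesis using True P0 by simp
  next
    case False
    with B have "\<alpha> = a0" by simp
    with A have "\<beta>\<^sup>2 = n\<^sup>2" by simp
    then have "\<beta> = n" using b n by simp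
    then show ?thesis using P0 \<open>\<alpha> = a0\<close> by simp
  qed
qed simp

lemma NI_zero_iff: "NI I x \<xi> = 0 \<longleftrightarrow> \<xi> \<in> CI I \<and> x \<in> sph_of \<xi>"
proof -
  obtain K where K: "unitim K" and x: "x = orl (oRe x) + norm (oIm x) *\<^sub>R K"
    using decomp_unit by blast
  have cl: "closed (CI I)" unfolding CI_def by simp
  have ne: "CI I \<noteq> {}" unfolding CI_def using span_zero by blast
  have pz: "(norm (\<xi> - projI I \<xi>))\<^sup>2 = 0 \<longleftrightarrow> \<xi> \<in> CI I"
    using closest_point_refl[OF cl ne, of \<xi>] unfolding projI_def by auto
  have "NI I x \<xi> = 0 \<longleftrightarrow> (norm (\<xi> - projI I \<xi>))\<^sup>2 = 0 \<and> oRe x = oRe (projI I \<xi>)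
      \<and> norm (oIm x) = norm (oIm (projI I \<xi>))"
    by (subst x, subst NI_formula[OF K], rule real_zero_lemma) simp_all
  also have "\<dots> \<longleftrightarrow> \<xi> \<in> CI I \<and> x \<in> sph_of \<xi>"
    unfolding pz sph_of_iff using closest_point_self[of \<xi> "CI I"] unfolding projI_def by auto
  finally show ?thesis .
qed

theorem lemma2p18:
  fixes D :: "(real \<times> real) set" and f :: "oct \<Rightarrow> oct" and I J :: oct
  assumes D_open: "open D" and D_ne: "D \<noteq> {}"
    and D_sym: "\<And>\<alpha> \<beta>. (\<alpha>, \<beta>) \<in> D \<Longrightarrow> (\<alpha>, - \<beta>) \<in> D"
    and Omega_conn: "connected (OmegaD D)"
    and D_bounded: "bounded D" and D_C1: "C1_boundary D"
    and f_slice: "slice_fun D f" and f_C1: "C1_on (OmegaD D) f"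
    and IJ: "(I, J) \<in> NN"
    and OmI_bounded: "bounded (OmegaI D I J)"
    and OmI_C1: "C1_boundary (phiI I J -` OmegaI D I J)"
  shows "{(x, \<xi>). NI I x \<xi> = 0} = GammaI I
    \<and> (\<forall>x \<xi>. (x, \<xi>) \<notin> GammaI I \<and> \<xi> \<in> bdI D I J \<longrightarrow>
          SfI D f I J x \<xi> = (1 / (2 * pi\<^sup>2 * (NI I x \<xi>)\<^sup>2)) *\<^sub>R MI I x \<xi> (omul (normalI D I J \<xi>) (f \<xi>)))
    \<and> (\<forall>x \<xi>. (x, \<xi>) \<notin> GammaI I \<and> \<xi> \<in> OmegaI D I J \<longrightarrow>
          VfI f I J x \<xi> = (1 / (2 * pi\<^sup>2 * (NI I x \<xi>)\<^sup>2)) *\<^sub>R MI I x \<xi> (DbarI I J f \<xi>))"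
  unfolding GammaI_def SfI_def VfI_def by (auto simp: NI_zero_iff kernel_all)

end
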